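(* Let $\mathbb{V}$ be a BIT speciale variety with signature $\mathcal{F}$ and BIT speciale terms $0,\alpha_1,\dots,\alpha_n,\theta$, let $A$ be a $\mathbb{V}$-algebra and $H$ a non-empty subset of $A$. For an operation $\tau$ of arity $k$, elements $a_1,\dots,a_k\in A$ and $1\le i\le n$, consider the conditions (A) $\alpha_i\big(\tau(\theta(h_{11},\dots,h_{1n},a_1),\dots,\theta(h_{k1},\dots,h_{kn},a_k)),\tau(a_1,\dots,a_k)\big)\in H$ for all $h_{rs}\in H$; (B) $\alpha_i(\theta(h_1,\dots,h_n,a),\theta(h'_1,\dots,h'_n,a))\in H$ for all $a\in A$ and all $h_1,\dots,h_n,h'_1,\dots,h'_n\in H$; (C$_j$) $\alpha_i\big(\tau(a_1,\dots,a_{j-1},\theta(h_1,\dots,h_n,a_j),a_{j+1},\dots,a_k),\tau(a_1,\dots,a_k)\big)\in H$ for all $h_1,\dots,h_n\in H$ (where $1\le j\le k$). Then the following are equivalent: (i) $H$ is an ideal of $A$; (ii) $H$ is closed under $\theta$ and under each $\alpha_i$ ($1\le i\le n$), and (A) holds for every $\tau\in\mathcal{F}\cup\{\theta\}$, every $1\le i\le n$ and all $a_1,\dots,a_k\in A$; (iii) $0\in H$, $H$ is closed under $\theta$ and under $\alpha_i(-,0)$ for each $i$, and (A) holds for every $\tau\in\mathcal{F}\cup\{\theta\}\cup\{\alpha_j\mid1\le j\le n\}$, every $1\le i\le n$ and all $a_1,\dots,a_k\in A$; (iv) $H$ is closed under $\theta$ and under $\alpha_i(-,0)$ for each $i$,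 (A) holds for every $\tau\in\mathcal{F}$, every $1\le i\le n$ and all $a_1,\dots,a_k\in A$, and (B) holds for every $1\le i\le n$; (v) $H$ is closed under $\theta$ and under $\alpha_i(-,0)$ for each $i$, (B) holds for every $1\le i\le n$, and (C$_j$) holds for every $\tau\in\mathcal{F}$ of arity $k$, all $a_1,\dots,a_k\in A$ and all $1\le i\le n$, $1\le j\le k$; (vi) $0\in H$, $H$ is closed under $\theta$ and under $\alpha_i(-,0)$ for each $i$, for every $a\in A$ the $\sim_H$-class of $a$ equals $\theta(H,\dots,H,a)$, and (C$_j$) holds for every $\tau\in\mathcal{F}$ of arity $k$, all $a_1,\dots,a_k\in A$ and all $1\le i\le n$, $1\le j\le k$; (vii) $\sim_H$ is a congruence on $A$ and $H$ is its kernel (its class containing $0$). Moreover, if $\mathbb{V}$ is semi-abelian, then the equivalences remain valid when, in (ii), "closed under $\theta$ and each $\alpha_i$", in (iii), "$0\in H$ and closed under $\theta$ and each $\alpha_i(-,0)$", and in (iv) and (v), "closed under $\theta$ and each $\alpha_i(-,0)$" are replaced by "$H$ is a subalgebra of $A$".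
   Context: $\mathbb{V}$ is a variety with signature $\mathcal{F}$ (finitary operation symbols, constants being 0-ary). BIT speciale: the algebraic theory of $\mathbb{V}$ contains a constant $0$ and, for some $n\ge1$, binary terms $\alpha_1,\dots,\alpha_n$ and an $(n+1)$-ary term $\theta$ with identities $\alpha_i(x,x)=0$ and $\theta(\alpha_1(x,y),\dots,\alpha_n(x,y),y)=x$. Semi-abelian means (equivalently) BIT speciale with $0$ the only constant of the algebraic theory. An ideal term in variables $y_1,\dots,y_p$ is a term $t(x_1,\dots,x_m,y_1,\dots,y_p)$ with $t(x_1,\dots,x_m,0,\dots,0)=0$ an identity of $\mathbb{V}$; a non-empty $H\subseteq A$ is an ideal if $t(a_1,\dots,a_m,b_1,\dots,b_p)\in H$ for every ideal term $t$, all $a_r\in A$, $b_s\in H$. Notation: $\theta(H,\dots,H,a)=\{\theta(h_1,\dots,h_n,a)\mid h_1,\dots,h_n\in H\}$. For $a,b\in A$, $a\sim_H b$ iff $\theta(H,\dots,H,a)=\theta(H,\dots,H,b)$; this is an equivalence relation. "Closed under $\theta$" means $\theta(h_1,\dots,h_{n+1})\in H$ for all $h_r\in H$; "closed under $\alpha_i$" means $\alpha_i(h,h')\in H$ for all $h,h'\in H$; "closed under $\alpha_i(-,0)$" means $\alpha_i(h,0)\in H$ for all $h\in H$. When $\tau$ is a constant ($k=0$), condition (A) reads $\alpha_i(\tau,\tau)\in H$. *)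

theory Defs
  imports Main
begin

datatype 'f trm = Var nat | App 'f "'f trm list"

fun vars :: "'f trm \<Rightarrow> nat set" where
  "vars (Var v) = {v}"
| "vars (App f ts) = (\<Union>t\<in>set ts. vars t)"

fun wf_trm :: "('f \<Rightarrow> nat) \<Rightarrow> 'f trm \<Rightarrow> bool" where
  "wf_trm ar (Var v) = True"
| "wf_trm ar (App f ts) = (length ts = ar f \<and> (\<forall>t\<in>set ts. wf_trm ar t))"

fun subst :: "(nat \<Rightarrow> 'f trm) \<Rightarrow> 'f trm \<Rightarrow> 'f trm" where
  "subst \<sigma> (Var v) = \<sigma> v"
| "subst \<sigma> (App f ts) = App f (map (subst \<sigma>) ts)"

fun eval :: "('f \<Rightarrow> 'a list \<Rightarrow> 'a) \<Rightarrow> (nat \<Rightarrow> 'a) \<Rightarrow> 'f trm \<Rightarrow> 'a" where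
  "eval ops \<rho> (Var v) = \<rho> v"
| "eval ops \<rho> (App f ts) = ops f (map (eval ops \<rho>) ts)"

text \<open>The variety V is presented by a set E of (well-formed) identities.
  An identity of V is an equational consequence of E (Birkhoff's equational logic).\<close>
inductive derivable :: "('f \<Rightarrow> nat) \<Rightarrow> ('f trm \<times> 'f trm) set \<Rightarrow> 'f trm \<Rightarrow> 'f trm \<Rightarrow> bool"
  for ar E where
  ax: "(s, t) \<in> E \<Longrightarrow> derivable ar E s t"
| refl: "wf_trm ar t \<Longrightarrow> derivable ar E t t"
| sym: "derivable ar E s t \<Longrightarrow> derivable ar E t s"
| trans: "derivable ar E s t \<Longrightarrow> derivable ar E t u \<Longrightarrow> derivable ar E s u"
| cong: "length ss = ar f \<Longrightarrow> length ts = ar f \<Longrightarrow> list_all2 (derivable ar E) ss ts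
          \<Longrightarrow> derivable ar E (App f ss) (App f ts)"
| inst: "derivable ar E s t \<Longrightarrow> (\<forall>v. wf_trm ar (\<sigma> v))
          \<Longrightarrow> derivable ar E (subst \<sigma> s) (subst \<sigma> t)"

definition variety_eqs :: "('f \<Rightarrow> nat) \<Rightarrow> ('f trm \<times> 'f trm) set \<Rightarrow> bool" where
  "variety_eqs ar E \<longleftrightarrow> (\<forall>(s, t)\<in>E. wf_trm ar s \<and> wf_trm ar t)"

definition is_alg :: "('f \<Rightarrow> nat) \<Rightarrow> 'a set \<Rightarrow> ('f \<Rightarrow> 'a list \<Rightarrow> 'a) \<Rightarrow> bool" where
  "is_alg ar A ops \<longleftrightarrow> (\<forall>f as. length as = ar f \<longrightarrow> set as \<subseteq> A \<longrightarrow> ops f as \<in> A)"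

definition V_alg :: "('f \<Rightarrow> nat) \<Rightarrow> ('f trm \<times> 'f trm) set \<Rightarrow> 'a set \<Rightarrow> ('f \<Rightarrow> 'a list \<Rightarrow> 'a) \<Rightarrow> bool" where
  "V_alg ar E A ops \<longleftrightarrow> is_alg ar A ops \<and>
     (\<forall>(s, t)\<in>E. \<forall>\<rho>. (\<forall>v. \<rho> v \<in> A) \<longrightarrow> eval ops \<rho> s = eval ops \<rho> t)"

text \<open>Indexing convention: alpha 0, ..., alpha (n-1) stand for alpha_1, ..., alpha_n;
  alpha i is binary in the variables Var 0 (= x) and Var 1 (= y);
  theta is (n+1)-ary in Var 0, ..., Var n, the last argument being Var n;
  zero is a closed term (a constant of the algebraic theory).\<close>
definition bit_speciale ::
  "('f \<Rightarrow> nat) \<Rightarrow> ('f trm \<times> 'f trm) set \<Rightarrow> nat \<Rightarrow> 'f trm \<Rightarrow> (nat \<Rightarrow> 'f trm) \<Rightarrow> 'f trm \<Rightarrow> bool" where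
  "bit_speciale ar E n zero alpha theta \<longleftrightarrow>
     variety_eqs ar E \<and> 1 \<le> n \<and>
     wf_trm ar zero \<and> vars zero = {} \<and>
     (\<forall>i<n. wf_trm ar (alpha i) \<and> vars (alpha i) \<subseteq> {0, 1}) \<and>
     wf_trm ar theta \<and> vars theta \<subseteq> {0..n} \<and>
     (\<forall>i<n. derivable ar E (subst (\<lambda>_. Var 0) (alpha i)) zero) \<and>
     derivable ar E (subst (\<lambda>j. if j < n then alpha j else Var 1) theta) (Var 0)"

definition semi_abelian ::
  "('f \<Rightarrow> nat) \<Rightarrow> ('f trm \<times> 'f trm) set \<Rightarrow> nat \<Rightarrow> 'f trm \<Rightarrow> (nat \<Rightarrow> 'f trm) \<Rightarrow> 'f trm \<Rightarrow> bool" where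
  "semi_abelian ar E n zero alpha theta \<longleftrightarrow>
     bit_speciale ar E n zero alpha theta \<and>
     (\<forall>c. wf_trm ar c \<and> vars c = {} \<longrightarrow> derivable ar E c zero)"

definition zeroA :: "('f \<Rightarrow> 'a list \<Rightarrow> 'a) \<Rightarrow> 'f trm \<Rightarrow> 'a" where
  "zeroA ops zero = eval ops (\<lambda>_. undefined) zero"

definition thA :: "('f \<Rightarrow> 'a list \<Rightarrow> 'a) \<Rightarrow> nat \<Rightarrow> 'f trm \<Rightarrow> (nat \<Rightarrow> 'a) \<Rightarrow> 'a \<Rightarrow> 'a" where
  "thA ops n theta hs a = eval ops (\<lambda>j. if j < n then hs j else a) theta"

definition alA :: "('f \<Rightarrow> 'a list \<Rightarrow> 'a) \<Rightarrow> (nat \<Rightarrow> 'f trm) \<Rightarrow> nat \<Rightarrow> 'a \<Rightarrow> 'a \<Rightarrow> 'a" where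
  "alA ops alpha i x y = eval ops (\<lambda>j. if j = 0 then x else y) (alpha i)"

definition thset :: "('f \<Rightarrow> 'a list \<Rightarrow> 'a) \<Rightarrow> nat \<Rightarrow> 'f trm \<Rightarrow> 'a set \<Rightarrow> 'a \<Rightarrow> 'a set" where
  "thset ops n theta H a = {thA ops n theta hs a | hs. \<forall>s<n. hs s \<in> H}"

definition simH :: "('f \<Rightarrow> 'a list \<Rightarrow> 'a) \<Rightarrow> nat \<Rightarrow> 'f trm \<Rightarrow> 'a set \<Rightarrow> 'a set \<Rightarrow> ('a \<times> 'a) set" where
  "simH ops n theta A H = {(a, b). a \<in> A \<and> b \<in> A \<and> thset ops n theta H a = thset ops n theta H b}"

definition op_trm :: "('f \<Rightarrow> nat) \<Rightarrow> 'f \<Rightarrow> 'f trm" where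
  "op_trm ar f = App f (map Var [0..<ar f])"

text \<open>Ideal term: t in the variables Y (the y's; the other variables are the x's)
  with t(x, 0, ..., 0) = 0 an identity of V.\<close>
definition ideal_term :: "('f \<Rightarrow> nat) \<Rightarrow> ('f trm \<times> 'f trm) set \<Rightarrow> 'f trm \<Rightarrow> 'f trm \<Rightarrow> nat set \<Rightarrow> bool" where
  "ideal_term ar E zero t Y \<longleftrightarrow> wf_trm ar t \<and>
     derivable ar E (subst (\<lambda>v. if v \<in> Y then zero else Var v) t) zero"

definition is_ideal ::
  "('f \<Rightarrow> nat) \<Rightarrow> ('f trm \<times> 'f trm) set \<Rightarrow> ('f \<Rightarrow> 'a list \<Rightarrow> 'a) \<Rightarrow> 'f trm \<Rightarrow> 'a set \<Rightarrow> 'a set \<Rightarrow> bool" where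
  "is_ideal ar E ops zero A H \<longleftrightarrow> H \<noteq> {} \<and> H \<subseteq> A \<and>
     (\<forall>t Y. ideal_term ar E zero t Y \<longrightarrow>
        (\<forall>\<rho>. (\<forall>v. \<rho> v \<in> A) \<longrightarrow> (\<forall>v\<in>Y. \<rho> v \<in> H) \<longrightarrow> eval ops \<rho> t \<in> H))"

definition congruence_on :: "('f \<Rightarrow> nat) \<Rightarrow> ('f \<Rightarrow> 'a list \<Rightarrow> 'a) \<Rightarrow> 'a set \<Rightarrow> ('a \<times> 'a) set \<Rightarrow> bool" where
  "congruence_on ar ops A R \<longleftrightarrow> equiv A R \<and>
     (\<forall>f as bs. length as = ar f \<longrightarrow> length bs = ar f \<longrightarrow> list_all2 (\<lambda>x y. (x, y) \<in> R) as bs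
        \<longrightarrow> (ops f as, ops f bs) \<in> R)"

definition subalgebra :: "('f \<Rightarrow> nat) \<Rightarrow> ('f \<Rightarrow> 'a list \<Rightarrow> 'a) \<Rightarrow> 'a set \<Rightarrow> 'a set \<Rightarrow> bool" where
  "subalgebra ar ops A H \<longleftrightarrow> H \<subseteq> A \<and> is_alg ar H ops"

definition closed_theta :: "('f \<Rightarrow> 'a list \<Rightarrow> 'a) \<Rightarrow> nat \<Rightarrow> 'f trm \<Rightarrow> 'a set \<Rightarrow> bool" where
  "closed_theta ops n theta H \<longleftrightarrow>
     (\<forall>hs a. (\<forall>s<n. hs s \<in> H) \<longrightarrow> a \<in> H \<longrightarrow> thA ops n theta hs a \<in> H)"

definition closed_alpha :: "('f \<Rightarrow> 'a list \<Rightarrow> 'a) \<Rightarrow> (nat \<Rightarrow> 'f trm) \<Rightarrow> nat \<Rightarrow> 'a set \<Rightarrow> bool" where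
  "closed_alpha ops alpha i H \<longleftrightarrow> (\<forall>x\<in>H. \<forall>y\<in>H. alA ops alpha i x y \<in> H)"

definition closed_alpha0 :: "('f \<Rightarrow> 'a list \<Rightarrow> 'a) \<Rightarrow> 'f trm \<Rightarrow> (nat \<Rightarrow> 'f trm) \<Rightarrow> nat \<Rightarrow> 'a set \<Rightarrow> bool" where
  "closed_alpha0 ops zero alpha i H \<longleftrightarrow> (\<forall>x\<in>H. alA ops alpha i x (zeroA ops zero) \<in> H)"

text \<open>Condition (A) for the k-ary term operation tau (a term in Var 0, ..., Var (k-1)), index i,
  for all a_1..a_k in A (a r = a_(r+1)) and all h_rs in H (h r s = h_(r+1)(s+1)).\<close>
definition condA ::
  "('f \<Rightarrow> 'a list \<Rightarrow> 'a) \<Rightarrow> nat \<Rightarrow> (nat \<Rightarrow> 'f trm) \<Rightarrow> 'f trm \<Rightarrow> 'a set \<Rightarrow> 'a set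
     \<Rightarrow> 'f trm \<Rightarrow> nat \<Rightarrow> nat \<Rightarrow> bool" where
  "condA ops n alpha theta A H tau k i \<longleftrightarrow>
     (\<forall>a. (\<forall>r<k. a r \<in> A) \<longrightarrow>
       (\<forall>h. (\<forall>r<k. \<forall>s<n. h r s \<in> H) \<longrightarrow>
          alA ops alpha i (eval ops (\<lambda>r. thA ops n theta (h r) (a r)) tau) (eval ops a tau) \<in> H))"

definition condB ::
  "('f \<Rightarrow> 'a list \<Rightarrow> 'a) \<Rightarrow> nat \<Rightarrow> (nat \<Rightarrow> 'f trm) \<Rightarrow> 'f trm \<Rightarrow> 'a set \<Rightarrow> 'a set \<Rightarrow> nat \<Rightarrow> bool" where
  "condB ops n alpha theta A H i \<longleftrightarrow>
     (\<forall>a\<in>A. \<forall>h h'. (\<forall>s<n. h s \<in> H \<and> h' s \<in> H) \<longrightarrow>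
        alA ops alpha i (thA ops n theta h a) (thA ops n theta h' a) \<in> H)"

text \<open>Condition (C_j) for all 1 <= j <= k (here j < k, 0-based) and all a_1..a_k in A.\<close>
definition condC ::
  "('f \<Rightarrow> 'a list \<Rightarrow> 'a) \<Rightarrow> nat \<Rightarrow> (nat \<Rightarrow> 'f trm) \<Rightarrow> 'f trm \<Rightarrow> 'a set \<Rightarrow> 'a set
     \<Rightarrow> 'f trm \<Rightarrow> nat \<Rightarrow> nat \<Rightarrow> bool" where
  "condC ops n alpha theta A H tau k i \<longleftrightarrow>
     (\<forall>a. (\<forall>r<k. a r \<in> A) \<longrightarrow> (\<forall>j<k. \<forall>h. (\<forall>s<n. h s \<in> H) \<longrightarrow>
        alA ops alpha i (eval ops (a(j := thA ops n theta h (a j))) tau) (eval ops a tau) \<in> H))"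

end

theory Submission
  imports Defs
begin

lemma subst_cong: "(\<And>v. v \<in> vars t \<Longrightarrow> \<sigma> v = \<sigma>' v) \<Longrightarrow> subst \<sigma> t = subst \<sigma>' t"
  by (induction t) auto

lemma subst_subst: "subst \<sigma> (subst \<tau> t) = subst (\<lambda>v. subst \<sigma> (\<tau> v)) t"
  by (induction t) auto

lemma subst_Var: "subst Var t = t"
  by (induction t) (auto simp: map_idI)

lemma subst_closed: "vars t = {} \<Longrightarrow> subst \<sigma> t = t"
  using subst_cong[of t \<sigma> Var] subst_Var by auto

lemma vars_subst: "vars (subst \<sigma> t) = (\<Union>v\<in>vars t. vars (\<sigma> v))"
  by (induction t) auto

lemma wf_subst: "wf_trm ar t \<Longrightarrow> (\<And>v. v \<in> vars t \<Longrightarrow> wf_trm ar (\<sigma> v)) \<Longrightarrow> wf_trm ar (subst \<sigma> t)"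
  by (induction t) auto

lemma eval_cong: "(\<And>v. v \<in> vars t \<Longrightarrow> \<rho> v = \<rho>' v) \<Longrightarrow> eval ops \<rho> t = eval ops \<rho>' t"
proof (induction t)
  case (App f ts)
  have "map (eval ops \<rho>) ts = map (eval ops \<rho>') ts"
    by (rule map_cong) (use App in auto)
  then show ?case by (simp only: eval.simps)
qed simp

lemma eval_subst: "eval ops \<rho> (subst \<sigma> t) = eval ops (\<lambda>v. eval ops \<rho> (\<sigma> v)) t"
  by (induction t) (auto cong: map_cong)

lemma eval_in: "is_alg ar A ops \<Longrightarrow> wf_trm ar t \<Longrightarrow> (\<And>v. v \<in> vars t \<Longrightarrow> \<rho> v \<in> A) \<Longrightarrow> eval ops \<rho> t \<in> A"
proof (induction t)
  case (App f ts)
  have "set (map (eval ops \<rho>) ts) \<subseteq> A" using App by auto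
  then show ?case using App(2,3) by (auto simp: is_alg_def)
qed simp

lemma deriv_wf: "derivable ar E s t \<Longrightarrow> variety_eqs ar E \<Longrightarrow> wf_trm ar s \<and> wf_trm ar t"
proof (induction rule: derivable.induct)
  case (ax s t) then show ?case by (auto simp: variety_eqs_def)
next
  case (cong ss f ts)
  then show ?case by (auto simp: list_all2_conv_all_nth in_set_conv_nth)
next
  case (inst s t \<sigma>) then show ?case by (auto intro: wf_subst)
qed auto

lemma deriv_sound: "derivable ar E s t \<Longrightarrow> V_alg ar E A ops \<Longrightarrow> (\<forall>v. \<rho> v \<in> A) \<Longrightarrow> eval ops \<rho> s = eval ops \<rho> t"
proof (induction arbitrary: \<rho> rule: derivable.induct)
  case (ax s t) then show ?case by (auto simp: V_alg_def)
next
  case (cong ss f ts)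
  then have "map (eval ops \<rho>) ss = map (eval ops \<rho>) ts"
    by (auto simp: list_all2_conv_all_nth intro!: nth_equalityI)
  then show ?case by simp
next
  case (inst s t \<sigma>)
  have "\<forall>v. eval ops \<rho> (\<sigma> v) \<in> A"
    using inst.prems inst.hyps(2) by (auto simp: V_alg_def intro: eval_in)
  then show ?case using inst by (simp add: eval_subst)
qed auto

lemma deriv_repl: "wf_trm ar u \<Longrightarrow> (\<And>v. v \<in> vars u \<Longrightarrow> derivable ar E (\<sigma> v) (\<sigma>' v))
  \<Longrightarrow> derivable ar E (subst \<sigma> u) (subst \<sigma>' u)"
proof (induction u)
  case (Var x) then show ?case by simp
next
  case (App f ts)
  have "list_all2 (derivable ar E) (map (subst \<sigma>) ts) (map (subst \<sigma>') ts)"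
    unfolding list_all2_conv_all_nth
  proof (intro conjI allI impI)
    fix i assume i: "i < length (map (subst \<sigma>) ts)"
    then have m: "ts ! i \<in> set ts" by simp
    show "derivable ar E (map (subst \<sigma>) ts ! i) (map (subst \<sigma>') ts ! i)"
    proof -
      have "derivable ar E (subst \<sigma> (ts ! i)) (subst \<sigma>' (ts ! i))"
        by (rule App.IH[OF m]) (use App.prems m in auto)
      then show ?thesis using i by simp
    qed
  qed simp
  then show ?case using App by (auto intro!: derivable.cong)
qed


lemma vars_op: "vars (op_trm ar f) = {0..<ar f}" by (auto simp: op_trm_def)
lemma wf_op: "wf_trm ar (op_trm ar f)" by (auto simp: op_trm_def)
lemma eval_op: "eval ops \<rho> (op_trm ar f) = ops f (map \<rho> [0..<ar f])"
  by (simp add: op_trm_def comp_def)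

lemma cong_eval:
  assumes C: "congruence_on ar ops A R" and w: "wf_trm ar t" and r: "\<forall>v. (\<rho> v, \<rho>' v) \<in> R"
  shows "(eval ops \<rho> t, eval ops \<rho>' t) \<in> R"
  using w
proof (induction t)
  case (Var x) then show ?case using r by simp
next
  case (App f ts)
  have "list_all2 (\<lambda>x y. (x, y) \<in> R) (map (eval ops \<rho>) ts) (map (eval ops \<rho>') ts)"
    unfolding list_all2_conv_all_nth using App by auto
  then show ?case using C App.prems unfolding congruence_on_def by auto
qed

lemma idealD: "is_ideal ar E ops zero A H \<Longrightarrow> ideal_term ar E zero t Y \<Longrightarrow> (\<forall>v. \<rho> v \<in> A) \<Longrightarrow> (\<forall>v\<in>Y. \<rho> v \<in> H) \<Longrightarrow> eval ops \<rho> t \<in> H"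
  unfolding is_ideal_def by blast

locale ctx =
  fixes ar :: "'f \<Rightarrow> nat" and E :: "('f trm \<times> 'f trm) set"
    and n :: nat and zero :: "'f trm" and alpha :: "nat \<Rightarrow> 'f trm" and theta :: "'f trm"
    and A :: "'a set" and ops :: "'f \<Rightarrow> 'a list \<Rightarrow> 'a" and H :: "'a set"
  assumes bit: "bit_speciale ar E n zero alpha theta"
    and alg: "V_alg ar E A ops"
    and HA: "H \<subseteq> A" and Hne: "H \<noteq> {}"
begin

lemma veq: "variety_eqs ar E" and n1: "1 \<le> n" and wf0: "wf_trm ar zero" and vz: "vars zero = {}"
  and wfa: "i<n \<Longrightarrow> wf_trm ar (alpha i)" and va: "i<n \<Longrightarrow> vars (alpha i) \<subseteq> {0,1}"
  and wft: "wf_trm ar theta" and vt: "vars theta \<subseteq> {0..n}"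
  and ida: "i<n \<Longrightarrow> derivable ar E (subst (\<lambda>_. Var 0) (alpha i)) zero"
  and idt: "derivable ar E (subst (\<lambda>j. if j < n then alpha j else Var 1) theta) (Var 0)"
  using bit unfolding bit_speciale_def by auto

lemma isalg: "is_alg ar A ops" using alg V_alg_def by auto

abbreviation "zA \<equiv> zeroA ops zero"
abbreviation "th \<equiv> thA ops n theta"
abbreviation "al \<equiv> alA ops alpha"
abbreviation "cls \<equiv> thset ops n theta H"

lemma D1: "i<n \<Longrightarrow> wf_trm ar u \<Longrightarrow> derivable ar E (subst (\<lambda>_. u) (alpha i)) zero"
proof -
  assume i: "i<n" and u: "wf_trm ar u"
  have "derivable ar E (subst (\<lambda>_. u) (subst (\<lambda>_. Var 0) (alpha i))) (subst (\<lambda>_. u) zero)"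
    by (rule derivable.inst[OF ida[OF i]]) (use u in auto)
  then show ?thesis by (simp add: subst_subst subst_closed[OF vz])
qed

lemma D2: "wf_trm ar u \<Longrightarrow> derivable ar E (subst (\<lambda>j. if j < n then zero else u) theta) u"
proof -
  assume u: "wf_trm ar u"
  have 1: "derivable ar E (subst (\<lambda>_. u) (subst (\<lambda>j. if j < n then alpha j else Var 1) theta)) (subst (\<lambda>_. u) (Var 0))"
    by (rule derivable.inst[OF idt]) (use u in auto)
  have e: "subst (\<lambda>_. u) (subst (\<lambda>j. if j < n then alpha j else Var 1) theta) = subst (\<lambda>j. if j < n then subst (\<lambda>_. u) (alpha j) else u) theta"
    by (auto simp: subst_subst intro!: subst_cong)
  have 2: "derivable ar E (subst (\<lambda>j. if j < n then zero else u) theta) (subst (\<lambda>j. if j < n then subst (\<lambda>_. u) (alpha j) else u) theta)"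
    by (rule deriv_repl[OF wft]) (auto intro: derivable.sym D1 derivable.refl u)
  show ?thesis using derivable.trans[OF 2] 1 e by simp
qed

lemma zA_ev: "eval ops \<rho> zero = zA" unfolding zeroA_def by (rule eval_cong) (use vz in auto)

lemma zA_A: "zA \<in> A"
proof -
  obtain h0 where "h0 \<in> H" using Hne by auto
  then have "eval ops (\<lambda>_. h0) zero \<in> A" using HA by (auto intro!: eval_in[OF isalg wf0])
  then show ?thesis by (simp add: zA_ev)
qed

lemma th_A: "(\<forall>s<n. h s \<in> A) \<Longrightarrow> a \<in> A \<Longrightarrow> th h a \<in> A"
  unfolding thA_def by (rule eval_in[OF isalg wft]) auto

lemma al_A: "i<n \<Longrightarrow> x\<in>A \<Longrightarrow> y\<in>A \<Longrightarrow> al i x y \<in> A"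
  unfolding alA_def by (rule eval_in[OF isalg wfa]) auto

lemma S1: "i<n \<Longrightarrow> x \<in> A \<Longrightarrow> al i x x = zA"
  using deriv_sound[OF ida alg, of i "\<lambda>_. x"] by (simp add: eval_subst alA_def zA_ev)

lemma S2: "x\<in>A \<Longrightarrow> y\<in>A \<Longrightarrow> th (\<lambda>j. al j x y) y = x"
proof -
  assume x: "x\<in>A" and y: "y\<in>A"
  have "eval ops (\<lambda>v. if v=0 then x else y) (subst (\<lambda>j. if j < n then alpha j else Var 1) theta) = x"
    using deriv_sound[OF idt alg, of "\<lambda>v. if v=0 then x else y"] x y by simp
  then show ?thesis unfolding eval_subst thA_def alA_def
    by (smt (verit, best) eval.simps(1) eval_cong one_neq_zero)
qed

lemma th_cong: "(\<forall>s<n. h s = h' s) \<Longrightarrow> th h a = th h' a"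
  unfolding thA_def by (rule arg_cong[where f="\<lambda>r. eval ops r theta"]) auto

lemma S3: "y\<in>A \<Longrightarrow> (\<forall>s<n. h s = zA) \<Longrightarrow> th h y = y"
proof -
  assume y: "y\<in>A" and h: "\<forall>s<n. h s = zA"
  have "th h y = th (\<lambda>j. al j y y) y" using h S1 y by (intro th_cong) auto
  then show ?thesis using S2 y by simp
qed

lemma cls_iff: "b \<in> cls a \<longleftrightarrow> (\<exists>hs. b = th hs a \<and> (\<forall>s<n. hs s \<in> H))"
  by (auto simp: thset_def)

end

context ctx begin

lemma ideal_condA:
  assumes I: "is_ideal ar E ops zero A H" and wt: "wf_trm ar tau" and vt': "vars tau \<subseteq> {0..<k}" and i: "i<n"
  shows "condA ops n alpha theta A H tau k i"
  unfolding condA_def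
proof (intro allI impI)
  fix a h assume a: "\<forall>r<k. a r \<in> A" and h: "\<forall>r<k. \<forall>s<n. h r s \<in> H"
  obtain h0 where h0: "h0 \<in> H" using Hne by auto
  define sth where "sth r = subst (\<lambda>j. if j < n then Var (k + r*n + j) else Var r) theta" for r
  define tau' where "tau' = subst sth tau"
  define t where "t = subst (\<lambda>v. if v = 0 then tau' else tau) (alpha i)"
  define Y where "Y = {v. k \<le> v}"
  define Z where "Z = (\<lambda>v. if v \<in> Y then zero else Var v)"
  have wsth: "wf_trm ar (sth r)" for r unfolding sth_def by (rule wf_subst[OF wft]) auto
  have wtau': "wf_trm ar tau'" unfolding tau'_def by (rule wf_subst[OF wt]) (use wsth in auto)
  have wtt: "wf_trm ar t" unfolding t_def by (rule wf_subst[OF wfa[OF i]]) (use wtau' wt in auto)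
  have Ztau: "subst Z tau = tau"
  proof -
    have "subst Z tau = subst Var tau" by (rule subst_cong) (use vt' in \<open>auto simp: Z_def Y_def\<close>)
    then show ?thesis by (simp add: subst_Var)
  qed
  have Zsth: "subst Z (sth r) = subst (\<lambda>j. if j < n then zero else Var r) theta" if "r < k" for r
    unfolding sth_def subst_subst using that by (auto simp: Z_def Y_def intro!: subst_cong)
  have Ztau': "derivable ar E (subst Z tau') tau"
  proof -
    have "derivable ar E (subst (\<lambda>r. subst Z (sth r)) tau) (subst Var tau)"
      apply (rule deriv_repl[OF wt])
      subgoal for v using vt' Zsth[of v] D2[of "Var v"] by auto
      done
    then show ?thesis unfolding tau'_def subst_subst subst_Var .
  qed
  have "subst Z t = subst (\<lambda>v. if v = 0 then subst Z tau' else tau) (alpha i)"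
    unfolding t_def subst_subst using Ztau by (auto intro!: subst_cong)
  moreover have "derivable ar E (subst (\<lambda>v. if v = 0 then subst Z tau' else tau) (alpha i)) (subst (\<lambda>_. tau) (alpha i))"
    by (rule deriv_repl[OF wfa[OF i]]) (auto intro: Ztau' derivable.refl wt)
  ultimately have "derivable ar E (subst Z t) zero"
    using D1[OF i wt] derivable.trans by metis
  then have it: "ideal_term ar E zero t Y" unfolding ideal_term_def Z_def using wtt by simp
  define \<rho> where "\<rho> v = (if v < k then a v else if (v - k) div n < k then h ((v - k) div n) ((v - k) mod n) else h0)" for v
  have md: "(v - k) mod n < n" for v using n1 by simp
  have rH': "\<rho> v \<in> H" if v: "\<not> v < k" for v
  proof (cases "(v - k) div n < k")
    case True
    then have "h ((v - k) div n) ((v - k) mod n) \<in> H" using h md by blast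
    then show ?thesis using v True by (simp add: \<rho>_def)
  next
    case False
    then show ?thesis using v h0 by (simp add: \<rho>_def)
  qed
  have rA: "\<forall>v. \<rho> v \<in> A"
  proof
    fix v show "\<rho> v \<in> A"
    proof (cases "v < k")
      case True then show ?thesis using a by (simp add: \<rho>_def)
    next
      case False then show ?thesis using rH' HA by blast
    qed
  qed
  have rH: "\<forall>v\<in>Y. \<rho> v \<in> H" using rH' unfolding Y_def by simp
  have "eval ops \<rho> t \<in> H" using idealD[OF I it rA rH] .
  moreover have "eval ops \<rho> tau = eval ops a tau"
    by (rule eval_cong) (use vt' in \<open>auto simp: \<rho>_def\<close>)
  moreover have "eval ops \<rho> tau' = eval ops (\<lambda>r. thA ops n theta (h r) (a r)) tau"
    unfolding tau'_def eval_subst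
  proof (rule eval_cong)
    fix r assume "r \<in> vars tau" then have r: "r < k" using vt' by auto
    have dm: "(k + r*n + j - k) div n = r" "(k + r*n + j - k) mod n = j" if "j < n" for j using that by auto
    show "eval ops \<rho> (sth r) = thA ops n theta (h r) (a r)"
      unfolding sth_def eval_subst thA_def using r dm by (auto simp: \<rho>_def intro!: eval_cong)
  qed
  moreover have "eval ops \<rho> t = alA ops alpha i (eval ops \<rho> tau') (eval ops \<rho> tau)"
    unfolding t_def eval_subst alA_def by (rule eval_cong) auto
  ultimately show "alA ops alpha i (eval ops (\<lambda>r. thA ops n theta (h r) (a r)) tau) (eval ops a tau) \<in> H"
    by simp
qed

lemma ideal_zero: assumes I: "is_ideal ar E ops zero A H" shows "zA \<in> H"
proof -
  obtain h0 where h0: "h0 \<in> H" using Hne by auto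
  have "ideal_term ar E zero zero {}" unfolding ideal_term_def
    using wf0 by (simp add: subst_closed[OF vz] derivable.refl)
  then have "eval ops (\<lambda>_. h0) zero \<in> H" by (rule idealD[OF I]) (use h0 HA in auto)
  then show ?thesis by (simp add: zA_ev)
qed

lemma ideal_theta: assumes I: "is_ideal ar E ops zero A H" shows "closed_theta ops n theta H"
  unfolding closed_theta_def
proof (intro allI impI)
  fix hs a assume hs: "\<forall>s<n. hs s \<in> H" and a: "a \<in> H"
  have "derivable ar E (subst (\<lambda>j. if j < n then zero else zero) theta) zero" by (rule D2[OF wf0])
  then have it: "ideal_term ar E zero theta UNIV" unfolding ideal_term_def using wft by simp
  have rH: "\<forall>v. (if v < n then hs v else a) \<in> H" using hs a by auto
  have rA: "\<forall>v. (if v < n then hs v else a) \<in> A" using rH HA by blast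
  have "eval ops (\<lambda>v. if v < n then hs v else a) theta \<in> H"
    using idealD[OF I it rA] rH by simp
  then show "thA ops n theta hs a \<in> H" by (simp add: thA_def)
qed

lemma ideal_alpha0: assumes I: "is_ideal ar E ops zero A H" and i: "i<n" shows "closed_alpha0 ops zero alpha i H"
  unfolding closed_alpha0_def
proof
  fix x assume x: "x \<in> H"
  define t where "t = subst (\<lambda>v. if v=0 then Var 0 else zero) (alpha i)"
  have "subst (\<lambda>v. if v \<in> {0} then zero else Var v) t = subst (\<lambda>_. zero) (alpha i)"
    unfolding t_def subst_subst by (rule subst_cong) (auto simp: subst_closed[OF vz])
  then have "ideal_term ar E zero t {0}" unfolding ideal_term_def
    using D1[OF i wf0] wfa[OF i] wf0 by (auto simp: t_def intro!: wf_subst)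
  then have "eval ops (\<lambda>_. x) t \<in> H" by (rule idealD[OF I]) (use x HA in auto)
  moreover have "eval ops (\<lambda>_. x) t = al i x zA"
    unfolding t_def eval_subst alA_def by (rule eval_cong) (auto simp: zA_ev)
  ultimately show "al i x zA \<in> H" by simp
qed

lemma ideal_sub: assumes I: "is_ideal ar E ops zero A H" and S: "semi_abelian ar E n zero alpha theta"
  shows "subalgebra ar ops A H"
  unfolding subalgebra_def is_alg_def
proof (intro conjI HA allI impI)
  fix f as assume l: "length as = ar f" and s: "set as \<subseteq> H"
  obtain h0 where h0: "h0 \<in> H" using Hne by auto
  have "vars (subst (\<lambda>_. zero) (op_trm ar f)) = {}" by (simp add: vars_subst vz)
  moreover have "wf_trm ar (subst (\<lambda>_. zero) (op_trm ar f))" using wf_op wf0 by (auto intro!: wf_subst)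
  ultimately have "derivable ar E (subst (\<lambda>_. zero) (op_trm ar f)) zero"
    using S unfolding semi_abelian_def by blast
  then have it: "ideal_term ar E zero (op_trm ar f) UNIV" unfolding ideal_term_def using wf_op by simp
  define \<rho> where "\<rho> r = (if r < ar f then as ! r else h0)" for r
  have rH: "\<forall>v. \<rho> v \<in> H" using s h0 l by (auto simp: \<rho>_def)
  have rA: "\<forall>v. \<rho> v \<in> A" using rH HA by blast
  have "eval ops \<rho> (op_trm ar f) \<in> H" using idealD[OF I it rA] rH by simp
  moreover have "map \<rho> [0..<ar f] = as" using l by (auto simp: \<rho>_def intro!: nth_equalityI)
  ultimately show "ops f as \<in> H" by (simp add: eval_op)
qed

lemma condAD: "condA ops n alpha theta A H tau k i \<Longrightarrow> (\<forall>r<k. a r \<in> A) \<Longrightarrow> (\<forall>r<k. \<forall>s<n. h r s \<in> H)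
  \<Longrightarrow> al i (eval ops (\<lambda>r. th (h r) (a r)) tau) (eval ops a tau) \<in> H"
  unfolding condA_def by blast

lemma closed_thetaD: "closed_theta ops n theta H \<Longrightarrow> (\<forall>s<n. hs s \<in> H) \<Longrightarrow> a \<in> H \<Longrightarrow> th hs a \<in> H"
  unfolding closed_theta_def by blast

lemma iii_alpha:
  assumes z: "zA \<in> H" and ct: "closed_theta ops n theta H" and a0: "\<forall>i<n. closed_alpha0 ops zero alpha i H"
    and cA: "\<forall>i<n. \<forall>j<n. condA ops n alpha theta A H (alpha j) 2 i"
  shows "\<forall>j<n. closed_alpha ops alpha j H"
proof (intro allI impI)
  fix j assume j: "j < n"
  show "closed_alpha ops alpha j H" unfolding closed_alpha_def
  proof (intro ballI)
    fix x y assume x: "x \<in> H" and y: "y \<in> H"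
    have xA: "x \<in> A" and yA: "y \<in> A" using x y HA by auto
    have zAA: "zA \<in> A" by (rule zA_A)
    have ai: "al i (al j x y) zA \<in> H" if i: "i < n" for i
    proof -
      define h :: "nat \<Rightarrow> nat \<Rightarrow> 'a" where "h r s = (if r = 0 then al s x zA else al s y zA)" for r s
      have hH: "\<forall>r<2. \<forall>s<n. h r s \<in> H"
      proof (intro allI impI)
        fix r s :: nat assume s: "s < n"
        have "al s x zA \<in> H" "al s y zA \<in> H" using a0 s x y unfolding closed_alpha0_def by auto
        then show "h r s \<in> H" unfolding h_def by simp
      qed
      have aA: "\<forall>r<2. (\<lambda>_. zA) r \<in> A" using zAA by simp
      have cc: "condA ops n alpha theta A H (alpha j) 2 i" using cA i j by simp
      have "al i (eval ops (\<lambda>r. th (h r) zA) (alpha j)) (eval ops (\<lambda>_. zA) (alpha j)) \<in> H"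
        by (rule condAD[OF cc aA hH])
      moreover have "eval ops (\<lambda>r. th (h r) zA) (alpha j) = al j x y"
        unfolding alA_def
      proof (rule eval_cong)
        fix v assume "v \<in> vars (alpha j)"
        then have "v = 0 \<or> v = 1" using va[OF j] by auto
        then show "th (h v) zA = (if v = 0 then x else y)"
          using S2[OF xA zAA] S2[OF yA zAA] unfolding h_def by auto
      qed
      moreover have "eval ops (\<lambda>_. zA) (alpha j) = zA"
        using S1[OF j zAA] by (simp add: alA_def)
      ultimately show ?thesis by simp
    qed
    have "al j x y \<in> A" using al_A[OF j xA yA] .
    then have "al j x y = th (\<lambda>i. al i (al j x y) zA) zA" using S2 zAA by simp
    also have "\<dots> \<in> H" by (rule closed_thetaD[OF ct _ z]) (simp add: ai)
    finally show "al j x y \<in> H" .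
  qed
qed

lemma ii_iv:
  assumes ct: "closed_theta ops n theta H" and ca: "\<forall>i<n. closed_alpha ops alpha i H"
    and cA: "\<forall>i<n. condA ops n alpha theta A H theta (Suc n) i"
  shows "zA \<in> H" and "\<forall>i<n. closed_alpha0 ops zero alpha i H" and "\<forall>i<n. condB ops n alpha theta A H i"
proof -
  obtain h0 where h0: "h0 \<in> H" using Hne by auto
  have "al 0 h0 h0 = zA" using S1[of 0 h0] n1 h0 HA by auto
  moreover have "al 0 h0 h0 \<in> H" using ca n1 h0 unfolding closed_alpha_def by auto
  ultimately show z: "zA \<in> H" by simp
  show "\<forall>i<n. closed_alpha0 ops zero alpha i H"
    using ca z unfolding closed_alpha_def closed_alpha0_def by blast
  show "\<forall>i<n. condB ops n alpha theta A H i"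
    unfolding condB_def
  proof (intro allI impI ballI)
    fix i a h h' assume i: "i < n" and a: "a \<in> A" and hh: "\<forall>s<n. h s \<in> H \<and> h' s \<in> H"
    define aa where "aa r = (if r < n then h' r else a)" for r
    define hh' where "hh' r s = (if r < n then al s (h r) (h' r) else zA)" for r s
    have aaA: "\<forall>r<Suc n. aa r \<in> A" using hh HA a unfolding aa_def by auto
    have hhH: "\<forall>r<Suc n. \<forall>s<n. hh' r s \<in> H" using hh ca z unfolding hh'_def closed_alpha_def by auto
    have "al i (eval ops (\<lambda>r. th (hh' r) (aa r)) theta) (eval ops aa theta) \<in> H"
      using cA i aaA hhH unfolding condA_def by blast
    moreover have "eval ops aa theta = th h' a" unfolding thA_def aa_def ..
    moreover have "eval ops (\<lambda>r. th (hh' r) (aa r)) theta = th h a"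
      unfolding thA_def[of ops n theta h a]
    proof (rule eval_cong)
      fix r assume "r \<in> vars theta"
      then have r: "r \<le> n" using vt by auto
      show "th (hh' r) (aa r) = (if r < n then h r else a)"
      proof (cases "r < n")
        case True
        then have "h r \<in> A" "h' r \<in> A" using hh HA by auto
        then show ?thesis using True S2 unfolding hh'_def aa_def by simp
      next
        case False
        then show ?thesis using S3[OF a] unfolding hh'_def aa_def by simp
      qed
    qed
    ultimately show "al i (th h a) (th h' a) \<in> H" by simp
  qed
qed

lemma iv_v:
  assumes z: "zA \<in> H" and cA: "\<forall>i<n. \<forall>f. condA ops n alpha theta A H (op_trm ar f) (ar f) i"
  shows "\<forall>i<n. \<forall>f. condC ops n alpha theta A H (op_trm ar f) (ar f) i"
  unfolding condC_def
proof (intro allI impI)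
  fix i f a j h assume i: "i < n" and a: "\<forall>r<ar f. a r \<in> A" and j: "j < ar f" and h: "\<forall>s<n. h s \<in> H"
  define hh where "hh r = (if r = j then h else (\<lambda>_. zA))" for r
  have "\<forall>r<ar f. \<forall>s<n. hh r s \<in> H" using h z unfolding hh_def by auto
  then have "al i (eval ops (\<lambda>r. th (hh r) (a r)) (op_trm ar f)) (eval ops a (op_trm ar f)) \<in> H"
    using cA i a unfolding condA_def by blast
  moreover have "eval ops (\<lambda>r. th (hh r) (a r)) (op_trm ar f) = eval ops (a(j := th h (a j))) (op_trm ar f)"
  proof (rule eval_cong)
    fix r assume "r \<in> vars (op_trm ar f)"
    then have "r < ar f" by (simp add: vars_op)
    then show "th (hh r) (a r) = (a(j := th h (a j))) r"
      using S3 a unfolding hh_def by auto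
  qed
  ultimately show "al i (eval ops (a(j := th h (a j))) (op_trm ar f)) (eval ops a (op_trm ar f)) \<in> H"
    by simp
qed

lemma B_zero: assumes B: "\<forall>i<n. condB ops n alpha theta A H i" shows "zA \<in> H"
proof -
  obtain h0 where h0: "h0 \<in> H" using Hne by auto
  then have h0A: "h0 \<in> A" using HA by auto
  have "al 0 (th (\<lambda>_. h0) h0) (th (\<lambda>_. h0) h0) \<in> H" using B n1 h0 h0A unfolding condB_def by auto
  moreover have "th (\<lambda>_. h0) h0 \<in> A" using th_A h0A by auto
  ultimately show ?thesis using S1 n1 by auto
qed

lemma cls_A: "a \<in> A \<Longrightarrow> cls a \<subseteq> A"
proof
  fix b assume a: "a \<in> A" and "b \<in> cls a"
  then obtain hs where "b = th hs a" "\<forall>s<n. hs s \<in> H" unfolding cls_iff by blast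
  then show "b \<in> A" using th_A[of hs a] a HA by auto
qed

lemma F2: "b \<in> A \<Longrightarrow> a \<in> A \<Longrightarrow> (\<forall>i<n. al i b a \<in> H) \<Longrightarrow> b \<in> cls a"
  unfolding cls_iff by (intro exI[of _ "\<lambda>i. al i b a"]) (simp add: S2)

lemma cls_refl: "zA \<in> H \<Longrightarrow> a \<in> A \<Longrightarrow> a \<in> cls a"
  unfolding cls_iff by (intro exI[of _ "\<lambda>_. zA"]) (simp add: S3)

lemma v_cls:
  assumes B: "\<forall>i<n. condB ops n alpha theta A H i"
  shows "\<forall>a\<in>A. simH ops n theta A H `` {a} = cls a"
proof -
  have z: "zA \<in> H" by (rule B_zero[OF B])
  have F1: "\<forall>i<n. al i b a \<in> H" if H1: "b \<in> cls a" and H2: "a \<in> A" for a b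
  proof -
    obtain hs where b: "b = th hs a" and hs: "\<forall>s<n. hs s \<in> H" using H1 unfolding cls_iff by blast
    have "al i (th hs a) (th (\<lambda>_. zA) a) \<in> H" if "i < n" for i
      using B that hs z \<open>a \<in> A\<close> unfolding condB_def by auto
    then show ?thesis using b S3 \<open>a \<in> A\<close> by auto
  qed
  have sy: "a \<in> cls b" if H1: "b \<in> cls a" and H2: "a \<in> A" for a b
  proof -
    obtain hs where b: "b = th hs a" and hs: "\<forall>s<n. hs s \<in> H" using H1 unfolding cls_iff by blast
    have "al i (th (\<lambda>_. zA) a) (th hs a) \<in> H" if "i < n" for i
      using B that hs z \<open>a \<in> A\<close> unfolding condB_def by auto
    then have "\<forall>i<n. al i a b \<in> H" using b S3 \<open>a \<in> A\<close> by auto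
    moreover have "b \<in> A" using that cls_A by auto
    ultimately show ?thesis using F2 \<open>a \<in> A\<close> by blast
  qed
  have tr: "c \<in> cls a" if H1: "b \<in> cls a" and H2: "c \<in> cls b" and H3: "a \<in> A" for a b c
  proof -
    have bA: "b \<in> A" using that cls_A by auto
    have cA: "c \<in> A" using that bA cls_A by auto
    obtain k where c: "c = th k b" and k: "\<forall>s<n. k s \<in> H" using H2 unfolding cls_iff by blast
    have ab: "a \<in> cls b" using sy that by blast
    then have g: "\<forall>i<n. al i a b \<in> H" using F1 bA by blast
    have ae: "a = th (\<lambda>i. al i a b) b" using S2 \<open>a \<in> A\<close> bA by simp
    have "al i c a \<in> H" if "i < n" for i
    proof -
      have "al i (th k b) (th (\<lambda>i. al i a b) b) \<in> H" using B that k g bA unfolding condB_def by auto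
      then show ?thesis using c ae by simp
    qed
    then show ?thesis using F2 cA \<open>a \<in> A\<close> by blast
  qed
  show ?thesis
  proof
    fix a assume a: "a \<in> A"
    show "simH ops n theta A H `` {a} = cls a"
    proof
      show "simH ops n theta A H `` {a} \<subseteq> cls a"
        using cls_refl[OF z] unfolding simH_def by auto
      show "cls a \<subseteq> simH ops n theta A H `` {a}"
      proof
        fix b assume b: "b \<in> cls a"
        have bA: "b \<in> A" using b a cls_A by auto
        have "cls a = cls b"
        proof
          show "cls b \<subseteq> cls a"
          proof
            fix x assume "x \<in> cls b" then show "x \<in> cls a" using tr[OF b _ a] by simp
          qed
          show "cls a \<subseteq> cls b"
          proof
            fix x assume x: "x \<in> cls a"
            have "a \<in> cls b" using sy[OF b a] .
            then show "x \<in> cls b" using tr[OF _ x bA] by simp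
          qed
        qed
        then show "b \<in> simH ops n theta A H `` {a}" using a bA unfolding simH_def by auto
      qed
    qed
  qed
qed



lemma condCD: "condC ops n alpha theta A H tau k i \<Longrightarrow> (\<forall>r<k. a r \<in> A) \<Longrightarrow> j < k \<Longrightarrow> (\<forall>s<n. h s \<in> H)
  \<Longrightarrow> al i (eval ops (a(j := th h (a j))) tau) (eval ops a tau) \<in> H"
  unfolding condC_def by blast

lemma vi_vii:
  assumes z: "zA \<in> H" and ct: "closed_theta ops n theta H" and a0: "\<forall>i<n. closed_alpha0 ops zero alpha i H"
    and cl: "\<forall>a\<in>A. simH ops n theta A H `` {a} = cls a"
    and cC: "\<forall>i<n. \<forall>f. condC ops n alpha theta A H (op_trm ar f) (ar f) i"
  shows "congruence_on ar ops A (simH ops n theta A H) \<and> H = simH ops n theta A H `` {zA}"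
proof -
  let ?R = "simH ops n theta A H"
  have eq: "equiv A ?R" unfolding equiv_def refl_on_def sym_def trans_def simH_def by auto
  have mem: "(a, b) \<in> ?R \<longleftrightarrow> b \<in> cls a" if "a \<in> A" for a b
  proof -
    have "(a, b) \<in> ?R \<longleftrightarrow> b \<in> ?R `` {a}" by simp
    also have "\<dots> \<longleftrightarrow> b \<in> cls a" using cl that by simp
    finally show ?thesis .
  qed
  have RA: "a \<in> A \<and> b \<in> A" if "(a,b) \<in> ?R" for a b using that unfolding simH_def by auto
  have step: "(ops f c, ops f (c[j := b])) \<in> ?R"
    if c: "length c = ar f" "set c \<subseteq> A" and j: "j < ar f" and cb: "(c ! j, b) \<in> ?R" for f c j b
  proof -
    have cjA: "c ! j \<in> A" using c j by (metis nth_mem subsetD)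
    have bA: "b \<in> A" using RA[OF cb] by simp
    have "b \<in> cls (c!j)" using mem[OF cjA] cb by simp
    then obtain hs where b: "b = th hs (c!j)" and hs: "\<forall>s<n. hs s \<in> H" unfolding cls_iff by blast
    define a where "a r = c ! r" for r
    have aA: "\<forall>r<ar f. a r \<in> A" using c unfolding a_def by (metis nth_mem subsetD)
    have e1: "eval ops a (op_trm ar f) = ops f c"
    proof -
      have "map a [0..<ar f] = c" unfolding a_def using c(1) by (metis map_nth)
      then show ?thesis by (simp add: eval_op)
    qed
    have e2: "eval ops (a(j := th hs (a j))) (op_trm ar f) = ops f (c[j := b])"
    proof -
      have "map (a(j := th hs (a j))) [0..<ar f] = c[j := b]"
        using c(1) j b by (auto simp: a_def nth_list_update intro!: nth_equalityI)
      then show ?thesis by (simp add: eval_op)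
    qed
    have x: "ops f (c[j:=b]) \<in> A"
    proof -
      have "set (c[j:=b]) \<subseteq> A" using c(2) bA set_update_subset_insert by fastforce
      then show ?thesis using isalg c(1) unfolding is_alg_def by simp
    qed
    have y: "ops f c \<in> A" using isalg c unfolding is_alg_def by simp
    have "al i (ops f (c[j:=b])) (ops f c) \<in> H" if i: "i < n" for i
    proof -
      have cc: "condC ops n alpha theta A H (op_trm ar f) (ar f) i" using cC i by simp
      show ?thesis using condCD[OF cc aA j hs] e1 e2 by simp
    qed
    then have "ops f (c[j:=b]) \<in> cls (ops f c)" using F2 x y by blast
    then show ?thesis using mem[OF y] by simp
  qed
  have cong: "congruence_on ar ops A ?R" unfolding congruence_on_def
  proof (intro conjI eq allI impI)
    fix f as bs assume la: "length as = ar f" and lb: "length bs = ar f"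
      and rel: "list_all2 (\<lambda>x y. (x,y) \<in> ?R) as bs"
    have ab: "(as!r, bs!r) \<in> ?R" if "r < ar f" for r using rel that la by (auto simp: list_all2_conv_all_nth)
    define cm where "cm m = map (\<lambda>r. if r < m then bs!r else as!r) [0..<ar f]" for m
    have cmA: "set (cm m) \<subseteq> A" for m
    proof
      fix x assume "x \<in> set (cm m)"
      then obtain r where r: "r < ar f" and x: "x = (if r < m then bs!r else as!r)" unfolding cm_def by auto
      show "x \<in> A" using RA[OF ab[OF r]] x by auto
    qed
    have lcm: "length (cm m) = ar f" for m unfolding cm_def by simp
    have ind: "(ops f as, ops f (cm m)) \<in> ?R" if "m \<le> ar f" for m
      using that
    proof (induction m)
      case 0
      have "cm 0 = as" unfolding cm_def using la by (auto intro: nth_equalityI)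
      moreover have "ops f (cm 0) \<in> A" using isalg cmA lcm unfolding is_alg_def by simp
      ultimately show ?case using eq unfolding equiv_def refl_on_def by auto
    next
      case (Suc m)
      have m: "m < ar f" using Suc.prems by simp
      have upd: "(cm m)[m := bs!m] = cm (Suc m)" unfolding cm_def
        using m by (auto simp: nth_list_update intro!: nth_equalityI)
      have "cm m ! m = as ! m" unfolding cm_def using m by simp
      then have "(cm m ! m, bs!m) \<in> ?R" using ab[OF m] by simp
      then have "(ops f (cm m), ops f ((cm m)[m := bs!m])) \<in> ?R" by (rule step[OF lcm cmA m])
      then have "(ops f (cm m), ops f (cm (Suc m))) \<in> ?R" using upd by simp
      moreover have "(ops f as, ops f (cm m)) \<in> ?R" using Suc by simp
      ultimately show ?case using eq unfolding equiv_def trans_def by blast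
    qed
    have "cm (ar f) = bs" unfolding cm_def using lb by (auto intro: nth_equalityI)
    then show "(ops f as, ops f bs) \<in> ?R" using ind[of "ar f"] by simp
  qed
  have "?R `` {zA} = cls zA" using cl zA_A by blast
  moreover have "cls zA \<subseteq> H"
  proof
    fix x assume "x \<in> cls zA"
    then obtain hs where "x = th hs zA" "\<forall>s<n. hs s \<in> H" unfolding cls_iff by blast
    then show "x \<in> H" using closed_thetaD[OF ct _ z] by simp
  qed
  moreover have "H \<subseteq> cls zA"
  proof
    fix h assume h: "h \<in> H"
    have "\<forall>i<n. al i h zA \<in> H" using a0 h unfolding closed_alpha0_def by simp
    then show "h \<in> cls zA" using F2 h HA zA_A by blast
  qed
  ultimately show ?thesis using cong by simp
qed

lemma vii_i:
  assumes C: "congruence_on ar ops A R" and K: "H = R `` {zA}"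
  shows "is_ideal ar E ops zero A H"
  unfolding is_ideal_def
proof (intro conjI Hne HA allI impI)
  fix t Y \<rho> assume it: "ideal_term ar E zero t Y" and rA: "\<forall>v. \<rho> v \<in> A" and rY: "\<forall>v\<in>Y. \<rho> v \<in> H"
  have eq: "equiv A R" using C unfolding congruence_on_def by simp
  define \<rho>0 where "\<rho>0 v = (if v \<in> Y then zA else \<rho> v)" for v
  have wt: "wf_trm ar t" and d: "derivable ar E (subst (\<lambda>v. if v \<in> Y then zero else Var v) t) zero"
    using it unfolding ideal_term_def by auto
  have "eval ops \<rho> (subst (\<lambda>v. if v \<in> Y then zero else Var v) t) = eval ops \<rho> zero"
    using deriv_sound[OF d alg rA] .
  moreover have "(\<lambda>v. eval ops \<rho> (if v \<in> Y then zero else Var v)) = \<rho>0"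
    by (auto simp: \<rho>0_def zA_ev)
  ultimately have e0: "eval ops \<rho>0 t = zA" by (simp add: eval_subst zA_ev)
  have "\<forall>v. (\<rho>0 v, \<rho> v) \<in> R"
  proof
    fix v show "(\<rho>0 v, \<rho> v) \<in> R"
    proof (cases "v \<in> Y")
      case True
      then have "\<rho> v \<in> R `` {zA}" using rY K by auto
      then show ?thesis using True by (simp add: \<rho>0_def)
    next
      case False
      then show ?thesis using rA eq unfolding \<rho>0_def equiv_def refl_on_def by auto
    qed
  qed
  then have "(eval ops \<rho>0 t, eval ops \<rho> t) \<in> R" by (rule cong_eval[OF C wt])
  then show "eval ops \<rho> t \<in> H" using e0 K by simp
qed

lemma sub_closed:
  assumes S: "subalgebra ar ops A H"
  shows "zA \<in> H" and "closed_theta ops n theta H" and "\<forall>i<n. closed_alpha ops alpha i H"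
    and "\<forall>i<n. closed_alpha0 ops zero alpha i H"
proof -
  have HH: "is_alg ar H ops" using S unfolding subalgebra_def by simp
  obtain h0 where h0: "h0 \<in> H" using Hne by auto
  have "eval ops (\<lambda>_. h0) zero \<in> H" by (rule eval_in[OF HH wf0]) (use h0 in simp)
  then show z: "zA \<in> H" by (simp add: zA_ev)
  show "closed_theta ops n theta H" unfolding closed_theta_def thA_def
    by (intro allI impI eval_in[OF HH wft]) auto
  show ca: "\<forall>i<n. closed_alpha ops alpha i H" unfolding closed_alpha_def alA_def
    by (intro allI impI ballI eval_in[OF HH wfa]) auto
  show "\<forall>i<n. closed_alpha0 ops zero alpha i H"
    using ca z unfolding closed_alpha_def closed_alpha0_def by simp
qed

end

theorem theorem2p5:
  fixes ar :: "'f \<Rightarrow> nat"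
    and E :: "('f trm \<times> 'f trm) set"
    and n :: nat and zero :: "'f trm" and alpha :: "nat \<Rightarrow> 'f trm" and theta :: "'f trm"
    and A :: "'a set" and ops :: "'f \<Rightarrow> 'a list \<Rightarrow> 'a" and H :: "'a set"
  assumes bit: "bit_speciale ar E n zero alpha theta"
    and alg: "V_alg ar E A ops"
    and HA: "H \<subseteq> A" and Hne: "H \<noteq> {}"
  defines "c_i \<equiv> is_ideal ar E ops zero A H"
    and "c_ii \<equiv> closed_theta ops n theta H \<and> (\<forall>i<n. closed_alpha ops alpha i H) \<and>
          (\<forall>i<n. (\<forall>f. condA ops n alpha theta A H (op_trm ar f) (ar f) i) \<and>
                 condA ops n alpha theta A H theta (Suc n) i)"
    and "c_iii \<equiv> zeroA ops zero \<in> H \<and> closed_theta ops n theta H \<and>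
          (\<forall>i<n. closed_alpha0 ops zero alpha i H) \<and>
          (\<forall>i<n. (\<forall>f. condA ops n alpha theta A H (op_trm ar f) (ar f) i) \<and>
                 condA ops n alpha theta A H theta (Suc n) i \<and>
                 (\<forall>j<n. condA ops n alpha theta A H (alpha j) 2 i))"
    and "c_iv \<equiv> closed_theta ops n theta H \<and> (\<forall>i<n. closed_alpha0 ops zero alpha i H) \<and>
          (\<forall>i<n. \<forall>f. condA ops n alpha theta A H (op_trm ar f) (ar f) i) \<and>
          (\<forall>i<n. condB ops n alpha theta A H i)"
    and "c_v \<equiv> closed_theta ops n theta H \<and> (\<forall>i<n. closed_alpha0 ops zero alpha i H) \<and>
          (\<forall>i<n. condB ops n alpha theta A H i) \<and>
          (\<forall>i<n. \<forall>f. condC ops n alpha theta A H (op_trm ar f) (ar f) i)"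
    and "c_vi \<equiv> zeroA ops zero \<in> H \<and> closed_theta ops n theta H \<and>
          (\<forall>i<n. closed_alpha0 ops zero alpha i H) \<and>
          (\<forall>a\<in>A. simH ops n theta A H `` {a} = thset ops n theta H a) \<and>
          (\<forall>i<n. \<forall>f. condC ops n alpha theta A H (op_trm ar f) (ar f) i)"
    and "c_vii \<equiv> congruence_on ar ops A (simH ops n theta A H) \<and>
          H = simH ops n theta A H `` {zeroA ops zero}"
    and "s_ii \<equiv> subalgebra ar ops A H \<and>
          (\<forall>i<n. (\<forall>f. condA ops n alpha theta A H (op_trm ar f) (ar f) i) \<and>
                 condA ops n alpha theta A H theta (Suc n) i)"
    and "s_iii \<equiv> subalgebra ar ops A H \<and>
          (\<forall>i<n. (\<forall>f. condA ops n alpha theta A H (op_trm ar f) (ar f) i) \<and>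
                 condA ops n alpha theta A H theta (Suc n) i \<and>
                 (\<forall>j<n. condA ops n alpha theta A H (alpha j) 2 i))"
    and "s_iv \<equiv> subalgebra ar ops A H \<and>
          (\<forall>i<n. \<forall>f. condA ops n alpha theta A H (op_trm ar f) (ar f) i) \<and>
          (\<forall>i<n. condB ops n alpha theta A H i)"
    and "s_v \<equiv> subalgebra ar ops A H \<and>
          (\<forall>i<n. condB ops n alpha theta A H i) \<and>
          (\<forall>i<n. \<forall>f. condC ops n alpha theta A H (op_trm ar f) (ar f) i)"
  shows "(c_i \<longleftrightarrow> c_ii) \<and> (c_i \<longleftrightarrow> c_iii) \<and> (c_i \<longleftrightarrow> c_iv) \<and> (c_i \<longleftrightarrow> c_v) \<and>
         (c_i \<longleftrightarrow> c_vi) \<and> (c_i \<longleftrightarrow> c_vii) \<and>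
         (semi_abelian ar E n zero alpha theta \<longrightarrow>
            (c_i \<longleftrightarrow> s_ii) \<and> (c_i \<longleftrightarrow> s_iii) \<and> (c_i \<longleftrightarrow> s_iv) \<and> (c_i \<longleftrightarrow> s_v))"
proof -
  interpret ctx ar E n zero alpha theta A ops H by (rule ctx.intro[OF bit alg HA Hne])
  have i3: "c_iii" if c1: "c_i"
  proof -
    have I: "is_ideal ar E ops zero A H" using c1 unfolding assms(5) .
    have q1: "condA ops n alpha theta A H (op_trm ar f) (ar f) i" if i: "i < n" for i f
      by (rule ideal_condA[OF I wf_op _ i]) (simp add: vars_op)
    have q2: "condA ops n alpha theta A H theta (Suc n) i" if i: "i < n" for i
      by (rule ideal_condA[OF I wft _ i]) (use vt in auto)
    have q3: "condA ops n alpha theta A H (alpha j) 2 i" if i: "i < n" and j: "j < n" for i j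
      by (rule ideal_condA[OF I wfa[OF j] _ i]) (use va[OF j] in auto)
    show ?thesis unfolding assms(7)
      using ideal_zero[OF I] ideal_theta[OF I] ideal_alpha0[OF I] q1 q2 q3 by blast
  qed
  have i32: "c_ii" if c3: "c_iii"
  proof -
    have z: "zeroA ops zero \<in> H" and ct: "closed_theta ops n theta H"
      and a0: "\<forall>i<n. closed_alpha0 ops zero alpha i H"
      and r: "\<forall>i<n. (\<forall>f. condA ops n alpha theta A H (op_trm ar f) (ar f) i) \<and>
                 condA ops n alpha theta A H theta (Suc n) i \<and>
                 (\<forall>j<n. condA ops n alpha theta A H (alpha j) 2 i)"
      using c3 unfolding assms(7) by auto
    have "\<forall>i<n. \<forall>j<n. condA ops n alpha theta A H (alpha j) 2 i" using r by blast
    then have "\<forall>j<n. closed_alpha ops alpha j H" by (rule iii_alpha[OF z ct a0])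
    then show ?thesis unfolding assms(6) using ct r by blast
  qed
  have i24: "c_iv" if c2: "c_ii"
  proof -
    have ct: "closed_theta ops n theta H" and ca: "\<forall>i<n. closed_alpha ops alpha i H"
      and r1: "\<forall>i<n. \<forall>f. condA ops n alpha theta A H (op_trm ar f) (ar f) i"
      and r2: "\<forall>i<n. condA ops n alpha theta A H theta (Suc n) i"
      using c2 unfolding assms(6) by auto
    show ?thesis unfolding assms(8) using ii_iv[OF ct ca r2] ct r1 by blast
  qed
  have i45: "c_v" if c4: "c_iv"
  proof -
    have ct: "closed_theta ops n theta H" and a0: "\<forall>i<n. closed_alpha0 ops zero alpha i H"
      and r1: "\<forall>i<n. \<forall>f. condA ops n alpha theta A H (op_trm ar f) (ar f) i"
      and B: "\<forall>i<n. condB ops n alpha theta A H i"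
      using c4 unfolding assms(8) by auto
    show ?thesis unfolding assms(9) using iv_v[OF B_zero[OF B] r1] ct a0 B by blast
  qed
  have i56: "c_vi" if c5: "c_v"
  proof -
    have ct: "closed_theta ops n theta H" and a0: "\<forall>i<n. closed_alpha0 ops zero alpha i H"
      and B: "\<forall>i<n. condB ops n alpha theta A H i"
      and cC: "\<forall>i<n. \<forall>f. condC ops n alpha theta A H (op_trm ar f) (ar f) i"
      using c5 unfolding assms(9) by auto
    show ?thesis unfolding assms(10) using B_zero[OF B] v_cls[OF B] ct a0 cC by blast
  qed
  have i67: "c_vii" if c6: "c_vi"
  proof -
    have z: "zeroA ops zero \<in> H" and ct: "closed_theta ops n theta H"
      and a0: "\<forall>i<n. closed_alpha0 ops zero alpha i H"
      and cl: "\<forall>a\<in>A. simH ops n theta A H `` {a} = thset ops n theta H a"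
      and cC: "\<forall>i<n. \<forall>f. condC ops n alpha theta A H (op_trm ar f) (ar f) i"
      using c6 unfolding assms(10) by auto
    show ?thesis unfolding assms(11) by (rule vi_vii[OF z ct a0 cl cC])
  qed
  have i71: "c_i" if c7: "c_vii"
  proof -
    have C: "congruence_on ar ops A (simH ops n theta A H)"
      and K: "H = simH ops n theta A H `` {zeroA ops zero}"
      using c7 unfolding assms(11) by auto
    show ?thesis unfolding assms(5) by (rule vii_i[OF C K])
  qed
  have main: "(c_i \<longleftrightarrow> c_ii) \<and> (c_i \<longleftrightarrow> c_iii) \<and> (c_i \<longleftrightarrow> c_iv) \<and> (c_i \<longleftrightarrow> c_v) \<and>
         (c_i \<longleftrightarrow> c_vi) \<and> (c_i \<longleftrightarrow> c_vii)"
    using i3 i32 i24 i45 i56 i67 i71 by blast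
  have semi: "(c_i \<longleftrightarrow> s_ii) \<and> (c_i \<longleftrightarrow> s_iii) \<and> (c_i \<longleftrightarrow> s_iv) \<and> (c_i \<longleftrightarrow> s_v)"
    if S: "semi_abelian ar E n zero alpha theta"
  proof -
    have sub: "subalgebra ar ops A H" if "c_i"
      using ideal_sub[OF _ S] that unfolding assms(5) by blast
    have s2: "s_ii \<longleftrightarrow> subalgebra ar ops A H \<and> c_ii"
      unfolding assms(6) assms(12) using sub_closed by blast
    have s3: "s_iii \<longleftrightarrow> subalgebra ar ops A H \<and> c_iii"
      unfolding assms(7) assms(13) using sub_closed by blast
    have s4: "s_iv \<longleftrightarrow> subalgebra ar ops A H \<and> c_iv"
      unfolding assms(8) assms(14) using sub_closed by blast
    have s5: "s_v \<longleftrightarrow> subalgebra ar ops A H \<and> c_v"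
      unfolding assms(9) assms(15) using sub_closed by blast
    show ?thesis using s2 s3 s4 s5 sub main by blast
  qed
  show ?thesis using main semi by blast
qed

end
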